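(* Let $P\in\mathbb{C}[y]$ with $\deg P\geq 2$, $\delta\in\mathbb{C}\setminus\{0\}$, $h_1(x,y)=(y,P(y)-\delta x)$, $\theta\in(0,2\pi)\setminus\{\frac{\pi}{2},\pi,\frac{3\pi}{2}\}$, $R_\theta$ the linear map of $\mathbb{C}^2$ with matrix $\begin{pmatrix}\cos\theta&-\sin\theta\\ \sin\theta&\cos\theta\end{pmatrix}$, $h_2=R_\theta^{-1}\circ h_1\circ R_\theta$ and $G=\langle h_1,h_2\rangle$. Let $\nu=a_1\delta_{h_1}+a_2\delta_{h_2}+a_3\delta_{h_1^{-1}}+a_4\delta_{h_2^{-1}}$ with $a_i>0$ for each $i$ and $\sum_{i=1}^4a_i=1$. If the filled Julia sets $K(h_1)$ and $K(h_2)$ are disjoint, then there is no $\nu$-stationary Borel probability measure on $\mathbb{C}^2$.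
   Context: For an automorphism $h$ of $\mathbb{C}^2$, the filled Julia set is $K(h)=\{(x,y)\in\mathbb{C}^2:(h^n(x,y))_{n\in\mathbb{Z}}\text{ is bounded}\}$. A Borel probability measure $\mu$ on $\mathbb{C}^2$ is $\nu$-stationary if $\mu=a_1(h_1)_*\mu+a_2(h_2)_*\mu+a_3(h_1^{-1})_*\mu+a_4(h_2^{-1})_*\mu$. *)

theory Defs
  imports "HOL-Probability.Probability" "HOL-Computational_Algebra.Polynomial"
begin

definition int_iter :: "('a \<Rightarrow> 'a) \<Rightarrow> int \<Rightarrow> 'a \<Rightarrow> 'a" where
  "int_iter h n = (if n \<ge> 0 then h ^^ nat n else inv h ^^ nat (- n))"

definition filled_julia :: "(complex \<times> complex \<Rightarrow> complex \<times> complex) \<Rightarrow> (complex \<times> complex) set" where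
  "filled_julia h = {z. bounded (range (\<lambda>n::int. int_iter h n z))}"

definition henon :: "complex poly \<Rightarrow> complex \<Rightarrow> complex \<times> complex \<Rightarrow> complex \<times> complex" where
  "henon P \<delta> = (\<lambda>(x, y). (y, poly P y - \<delta> * x))"

definition rot :: "real \<Rightarrow> complex \<times> complex \<Rightarrow> complex \<times> complex" where
  "rot \<theta> = (\<lambda>(x, y). (complex_of_real (cos \<theta>) * x - complex_of_real (sin \<theta>) * y,
                       complex_of_real (sin \<theta>) * x + complex_of_real (cos \<theta>) * y))"

definition stationary ::
  "real \<Rightarrow> real \<Rightarrow> real \<Rightarrow> real \<Rightarrow> (complex \<times> complex \<Rightarrow> complex \<times> complex)
   \<Rightarrow> (complex \<times> complex \<Rightarrow> complex \<times> complex) \<Rightarrow> (complex \<times> complex) measure \<Rightarrow> bool" where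
  "stationary a1 a2 a3 a4 h1 h2 \<mu> \<longleftrightarrow>
     sets \<mu> = sets borel \<and> prob_space \<mu> \<and>
     (\<forall>A \<in> sets borel.
        emeasure \<mu> A =
          ennreal a1 * emeasure (distr \<mu> borel h1) A
        + ennreal a2 * emeasure (distr \<mu> borel h2) A
        + ennreal a3 * emeasure (distr \<mu> borel (inv h1)) A
        + ennreal a4 * emeasure (distr \<mu> borel (inv h2)) A)"

end

theory Submission
  imports Defs "HOL-Computational_Algebra.Fundamental_Theorem_Algebra"
begin


type_synonym C2 = "complex \<times> complex"

lemma stat_integral:
  fixes g1 g2 g3 g4 :: "C2 \<Rightarrow> C2" and \<mu> :: "C2 measure"
  assumes sets: "sets \<mu> = sets borel"
    and eq: "\<forall>A \<in> sets borel. emeasure \<mu> A =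
          ennreal a1 * emeasure (distr \<mu> borel g1) A
        + ennreal a2 * emeasure (distr \<mu> borel g2) A
        + ennreal a3 * emeasure (distr \<mu> borel g3) A
        + ennreal a4 * emeasure (distr \<mu> borel g4) A"
    and m1: "g1 \<in> borel_measurable borel" and m2: "g2 \<in> borel_measurable borel"
    and m3: "g3 \<in> borel_measurable borel" and m4: "g4 \<in> borel_measurable borel"
    and f: "f \<in> borel_measurable borel"
  shows "(\<integral>\<^sup>+x. f x \<partial>\<mu>) = ennreal a1 * (\<integral>\<^sup>+x. f (g1 x) \<partial>\<mu>) + ennreal a2 * (\<integral>\<^sup>+x. f (g2 x) \<partial>\<mu>)
     + ennreal a3 * (\<integral>\<^sup>+x. f (g3 x) \<partial>\<mu>) + ennreal a4 * (\<integral>\<^sup>+x. f (g4 x) \<partial>\<mu>)"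
proof -
  have mc: "\<And>N. measurable \<mu> N = measurable borel N" by (rule measurable_cong_sets[OF sets refl])
  have sp: "space \<mu> = UNIV" using sets_eq_imp_space_eq[OF sets] by simp
  have g1: "g1 \<in> \<mu> \<rightarrow>\<^sub>M borel" by (subst mc) (rule m1)
  have g2: "g2 \<in> \<mu> \<rightarrow>\<^sub>M borel" by (subst mc) (rule m2)
  have g3: "g3 \<in> \<mu> \<rightarrow>\<^sub>M borel" by (subst mc) (rule m3)
  have g4: "g4 \<in> \<mu> \<rightarrow>\<^sub>M borel" by (subst mc) (rule m4)
  have key: "\<And>(g::C2\<Rightarrow>C2) u. g \<in> \<mu> \<rightarrow>\<^sub>M borel \<Longrightarrow> u \<in> borel_measurable borel \<Longrightarrow> (\<integral>\<^sup>+x. u (g x) \<partial>\<mu>) = (\<integral>\<^sup>+x. u x \<partial>distr \<mu> borel g)"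
    by (simp add: nn_integral_distr)
  have comp: "\<And>(g::C2\<Rightarrow>C2) (u::C2\<Rightarrow>ennreal). g \<in> \<mu> \<rightarrow>\<^sub>M borel \<Longrightarrow> u \<in> borel_measurable borel \<Longrightarrow> (\<lambda>x. u (g x)) \<in> borel_measurable \<mu>"
    by (rule measurable_compose)
  have fb: "f \<in> borel_measurable \<mu>" by (subst mc) (rule f)
  from fb show ?thesis
  proof (induction rule: borel_measurable_induct)
    case (cong f g)
    then show ?case by (simp add: sp)
  next
    case (set A)
    have Ab: "A \<in> sets borel" using set sets by simp
    have i: "\<And>g::C2\<Rightarrow>C2. g \<in> \<mu> \<rightarrow>\<^sub>M borel \<Longrightarrow> (\<integral>\<^sup>+x. indicator A (g x) \<partial>\<mu>) = emeasure (distr \<mu> borel g) A"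
    proof -
      fix g :: "C2 \<Rightarrow> C2" assume g: "g \<in> \<mu> \<rightarrow>\<^sub>M borel"
      have "(\<integral>\<^sup>+x. indicator A (g x) \<partial>\<mu>) = (\<integral>\<^sup>+x. indicator A x \<partial>distr \<mu> borel g)"
        by (rule key[OF g borel_measurable_indicator[OF Ab]])
      also have "\<dots> = emeasure (distr \<mu> borel g) A"
        by (rule nn_integral_indicator) (simp add: Ab)
      finally show "?thesis g" .
    qed
    have "(\<integral>\<^sup>+x. indicator A x \<partial>\<mu>) = emeasure \<mu> A" using set by (rule nn_integral_indicator)
    then show ?case unfolding i[OF g1] i[OF g2] i[OF g3] i[OF g4] using eq Ab by (simp only:)
  next
    case (mult u c)
    have ub: "u \<in> borel_measurable borel" using \<open>u \<in> borel_measurable \<mu>\<close> by (subst (asm) mc)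
    have cm: "\<And>g::C2\<Rightarrow>C2. g \<in> \<mu> \<rightarrow>\<^sub>M borel \<Longrightarrow> (\<integral>\<^sup>+x. c * u (g x) \<partial>\<mu>) = c * (\<integral>\<^sup>+x. u (g x) \<partial>\<mu>)"
      by (rule nn_integral_cmult[OF comp[OF _ ub]])
    have IH: "(\<integral>\<^sup>+x. u x \<partial>\<mu>) = ennreal a1 * (\<integral>\<^sup>+x. u (g1 x) \<partial>\<mu>) + ennreal a2 * (\<integral>\<^sup>+x. u (g2 x) \<partial>\<mu>)
     + ennreal a3 * (\<integral>\<^sup>+x. u (g3 x) \<partial>\<mu>) + ennreal a4 * (\<integral>\<^sup>+x. u (g4 x) \<partial>\<mu>)" by (rule mult(4))
    have c0: "(\<integral>\<^sup>+x. c * u x \<partial>\<mu>) = c * (\<integral>\<^sup>+x. u x \<partial>\<mu>)"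
      by (rule nn_integral_cmult[OF \<open>u \<in> borel_measurable \<mu>\<close>])
    show ?case unfolding c0 cm[OF g1] cm[OF g2] cm[OF g3] cm[OF g4] IH
      by (simp only: distrib_left mult.left_commute)
  next
    case (add u v)
    have ub: "u \<in> borel_measurable borel" using \<open>u \<in> borel_measurable \<mu>\<close> by (subst (asm) mc)
    have vb: "v \<in> borel_measurable borel" using \<open>v \<in> borel_measurable \<mu>\<close> by (subst (asm) mc)
    have ad: "\<And>g::C2\<Rightarrow>C2. g \<in> \<mu> \<rightarrow>\<^sub>M borel \<Longrightarrow> (\<integral>\<^sup>+x. v (g x) + u (g x) \<partial>\<mu>) = (\<integral>\<^sup>+x. v (g x) \<partial>\<mu>) + (\<integral>\<^sup>+x. u (g x) \<partial>\<mu>)"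
      by (rule nn_integral_add[OF comp[OF _ vb] comp[OF _ ub]])
    have "(\<integral>\<^sup>+x. v x + u x \<partial>\<mu>) = (\<integral>\<^sup>+x. v x \<partial>\<mu>) + (\<integral>\<^sup>+x. u x \<partial>\<mu>)"
      by (rule nn_integral_add) (use add in auto)
    moreover have IHu: "(\<integral>\<^sup>+x. u x \<partial>\<mu>) = ennreal a1 * (\<integral>\<^sup>+x. u (g1 x) \<partial>\<mu>) + ennreal a2 * (\<integral>\<^sup>+x. u (g2 x) \<partial>\<mu>)
     + ennreal a3 * (\<integral>\<^sup>+x. u (g3 x) \<partial>\<mu>) + ennreal a4 * (\<integral>\<^sup>+x. u (g4 x) \<partial>\<mu>)" by (rule add)
    moreover have IHv: "(\<integral>\<^sup>+x. v x \<partial>\<mu>) = ennreal a1 * (\<integral>\<^sup>+x. v (g1 x) \<partial>\<mu>) + ennreal a2 * (\<integral>\<^sup>+x. v (g2 x) \<partial>\<mu>)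
     + ennreal a3 * (\<integral>\<^sup>+x. v (g3 x) \<partial>\<mu>) + ennreal a4 * (\<integral>\<^sup>+x. v (g4 x) \<partial>\<mu>)" by (rule add)
    ultimately show ?case unfolding ad[OF g1] ad[OF g2] ad[OF g3] ad[OF g4]
      by (simp only: distrib_left add_ac)
  next
    case (seq U)
    have Ub: "\<And>i. U i \<in> borel_measurable borel" using seq(1) by (subst (asm) mc) auto
    have inc: "\<And>g::C2\<Rightarrow>C2. incseq (\<lambda>i x. U i (g x))"
      using \<open>incseq U\<close> unfolding incseq_def le_fun_def by blast
    have sg: "\<And>g::C2\<Rightarrow>C2. g \<in> \<mu> \<rightarrow>\<^sub>M borel \<Longrightarrow> (\<integral>\<^sup>+x. (SUP i. U i) (g x) \<partial>\<mu>) = (SUP i. (\<integral>\<^sup>+x. U i (g x) \<partial>\<mu>))"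
    proof -
      fix g :: "C2 \<Rightarrow> C2" assume g: "g \<in> \<mu> \<rightarrow>\<^sub>M borel"
      have "(\<integral>\<^sup>+x. (SUP i. U i) (g x) \<partial>\<mu>) = (\<integral>\<^sup>+x. (SUP i. U i (g x)) \<partial>\<mu>)" by (simp add: image_comp)
      also have "\<dots> = (SUP i. (\<integral>\<^sup>+x. U i (g x) \<partial>\<mu>))"
        by (rule nn_integral_monotone_convergence_SUP[OF inc]) (rule comp[OF g Ub])
      finally show "?thesis g" .
    qed
    have incI: "\<And>g::C2\<Rightarrow>C2. incseq (\<lambda>i. (\<integral>\<^sup>+x. U i (g x) \<partial>\<mu>))"
      using inc by (auto simp: incseq_def intro!: nn_integral_mono simp: le_fun_def)
    have s0: "(\<integral>\<^sup>+x. (SUP i. U i) x \<partial>\<mu>) = (SUP i. (\<integral>\<^sup>+x. U i x \<partial>\<mu>))"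
      using sg[of "\<lambda>x. x"] by (simp add: mc)
    let ?I = "\<lambda>g i. (\<integral>\<^sup>+x. U i (g x) \<partial>\<mu>)"
    have incc: "\<And>(g::C2\<Rightarrow>C2) c. incseq (\<lambda>i. ennreal c * ?I g i)"
      using incI by (auto simp: incseq_def intro: mult_left_mono)
    have "(SUP i. ennreal a1 * ?I g1 i + ennreal a2 * ?I g2 i + ennreal a3 * ?I g3 i + ennreal a4 * ?I g4 i)
        = ennreal a1 * (SUP i. ?I g1 i) + ennreal a2 * (SUP i. ?I g2 i) + ennreal a3 * (SUP i. ?I g3 i) + ennreal a4 * (SUP i. ?I g4 i)"
    proof -
      let ?F1 = "\<lambda>i. ennreal a1 * ?I g1 i" and ?F2 = "\<lambda>i. ennreal a2 * ?I g2 i"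
      let ?F3 = "\<lambda>i. ennreal a3 * ?I g3 i" and ?F4 = "\<lambda>i. ennreal a4 * ?I g4 i"
      have i12: "incseq (\<lambda>i. ?F1 i + ?F2 i)" using incc[of a1 g1] incc[of a2 g2]
        unfolding incseq_def by (blast intro: add_mono)
      have i123: "incseq (\<lambda>i. ?F1 i + ?F2 i + ?F3 i)" using i12 incc[of a3 g3]
        unfolding incseq_def by (blast intro: add_mono)
      have "(SUP i. ?F1 i + ?F2 i + ?F3 i + ?F4 i) = (SUP i. ?F1 i + ?F2 i + ?F3 i) + (SUP i. ?F4 i)"
        by (rule ennreal_SUP_add[OF i123 incc])
      also have "(SUP i. ?F1 i + ?F2 i + ?F3 i) = (SUP i. ?F1 i + ?F2 i) + (SUP i. ?F3 i)"
        by (rule ennreal_SUP_add[OF i12 incc])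
      also have "(SUP i. ?F1 i + ?F2 i) = (SUP i. ?F1 i) + (SUP i. ?F2 i)"
        by (rule ennreal_SUP_add[OF incc incc])
      finally show ?thesis by (simp only: SUP_mult_left_ennreal)
    qed
    moreover have IH: "\<And>i. (\<integral>\<^sup>+x. U i x \<partial>\<mu>) = ennreal a1 * ?I g1 i + ennreal a2 * ?I g2 i + ennreal a3 * ?I g3 i + ennreal a4 * ?I g4 i"
      by (rule seq)
    ultimately show ?case unfolding s0 sg[OF g1] sg[OF g2] sg[OF g3] sg[OF g4] IH by simp
  qed
qed
lemma stat_null:
  fixes g1 g2 g3 g4 :: "C2 \<Rightarrow> C2" and \<mu> :: "C2 measure" and h :: "C2 \<Rightarrow> real"
  assumes sets: "sets \<mu> = sets borel" and fin: "emeasure \<mu> UNIV \<noteq> \<infinity>"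
    and eq: "\<forall>A \<in> sets borel. emeasure \<mu> A =
          ennreal a1 * emeasure (distr \<mu> borel g1) A
        + ennreal a2 * emeasure (distr \<mu> borel g2) A
        + ennreal a3 * emeasure (distr \<mu> borel g3) A
        + ennreal a4 * emeasure (distr \<mu> borel g4) A"
    and m1: "g1 \<in> borel_measurable borel" and m2: "g2 \<in> borel_measurable borel"
    and m3: "g3 \<in> borel_measurable borel" and m4: "g4 \<in> borel_measurable borel"
    and a: "a1 \<ge> 0" "a2 \<ge> 0" "a3 \<ge> 0" "a4 \<ge> 0"
    and hb: "h \<in> borel_measurable borel" and h0: "\<And>z. 0 \<le> h z" and h1: "\<And>z. h z \<le> 1"
    and sup: "\<And>z. a1 * h (g1 z) + a2 * h (g2 z) + a3 * h (g3 z) + a4 * h (g4 z) \<le> h z"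
    and strict: "\<And>z. z \<notin> D \<Longrightarrow> a1 * h (g1 z) + a2 * h (g2 z) + a3 * h (g3 z) + a4 * h (g4 z) < h z"
    and D: "D \<in> sets borel"
  shows "emeasure \<mu> (- D) = 0"
proof -
  have mc: "\<And>N. measurable \<mu> N = measurable borel N" by (rule measurable_cong_sets[OF sets refl])
  have sp: "space \<mu> = UNIV" using sets_eq_imp_space_eq[OF sets] by simp
  define Ph where "Ph z = a1 * h (g1 z) + a2 * h (g2 z) + a3 * h (g3 z) + a4 * h (g4 z)" for z
  have Ph0: "\<And>z. 0 \<le> Ph z" unfolding Ph_def using a h0 by (simp add: add_nonneg_nonneg)
  have hbe: "(\<lambda>x. ennreal (h x)) \<in> borel_measurable borel" using hb by measurable
  have hm: "(\<lambda>x. ennreal (h x)) \<in> borel_measurable \<mu>" by (subst mc) (rule hbe)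
  have Pm: "(\<lambda>x. ennreal (Ph x)) \<in> borel_measurable \<mu>"
    unfolding Ph_def by (subst mc) (use hb m1 m2 m3 m4 in measurable)
  have cmp: "\<And>g::C2\<Rightarrow>C2. g \<in> borel_measurable borel \<Longrightarrow> (\<lambda>x. ennreal (h (g x))) \<in> borel_measurable \<mu>"
    by (subst mc) (use hb in measurable)
  have I: "(\<integral>\<^sup>+x. ennreal (h x) \<partial>\<mu>) = ennreal a1 * (\<integral>\<^sup>+x. ennreal (h (g1 x)) \<partial>\<mu>) + ennreal a2 * (\<integral>\<^sup>+x. ennreal (h (g2 x)) \<partial>\<mu>)
     + ennreal a3 * (\<integral>\<^sup>+x. ennreal (h (g3 x)) \<partial>\<mu>) + ennreal a4 * (\<integral>\<^sup>+x. ennreal (h (g4 x)) \<partial>\<mu>)"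
    by (rule stat_integral[OF sets eq m1 m2 m3 m4 hbe])
  have Pe: "\<And>x. ennreal (Ph x) = ennreal a1 * ennreal (h (g1 x)) + ennreal a2 * ennreal (h (g2 x)) + ennreal a3 * ennreal (h (g3 x)) + ennreal a4 * ennreal (h (g4 x))"
    unfolding Ph_def using a h0 by (simp add: ennreal_plus[symmetric] ennreal_mult[symmetric] add_nonneg_nonneg del: ennreal_plus)
  have "(\<integral>\<^sup>+x. ennreal (Ph x) \<partial>\<mu>) = ennreal a1 * (\<integral>\<^sup>+x. ennreal (h (g1 x)) \<partial>\<mu>) + ennreal a2 * (\<integral>\<^sup>+x. ennreal (h (g2 x)) \<partial>\<mu>)
     + ennreal a3 * (\<integral>\<^sup>+x. ennreal (h (g3 x)) \<partial>\<mu>) + ennreal a4 * (\<integral>\<^sup>+x. ennreal (h (g4 x)) \<partial>\<mu>)"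
    unfolding Pe using cmp[OF m1] cmp[OF m2] cmp[OF m3] cmp[OF m4]
    by (simp add: nn_integral_add nn_integral_cmult)
  with I have II: "(\<integral>\<^sup>+x. ennreal (Ph x) \<partial>\<mu>) = (\<integral>\<^sup>+x. ennreal (h x) \<partial>\<mu>)" by simp
  have "(\<integral>\<^sup>+x. ennreal (Ph x) \<partial>\<mu>) \<le> (\<integral>\<^sup>+x. 1 \<partial>\<mu>)"
    by (rule nn_integral_mono) (use sup h1 order_trans in \<open>simp add: Ph_def, blast\<close>)
  also have "\<dots> < \<infinity>" using fin sp by (simp add: top.not_eq_extremum)
  finally have Pfin: "(\<integral>\<^sup>+x. ennreal (Ph x) \<partial>\<mu>) \<noteq> \<infinity>" by simp
  have "(\<integral>\<^sup>+x. ennreal (h x) - ennreal (Ph x) \<partial>\<mu>) = (\<integral>\<^sup>+x. ennreal (h x) \<partial>\<mu>) - (\<integral>\<^sup>+x. ennreal (Ph x) \<partial>\<mu>)"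
    by (rule nn_integral_diff[OF hm Pm Pfin]) (use sup in \<open>auto simp add: Ph_def intro!: AE_I2 ennreal_leI\<close>)
  also have "\<dots> = 0" using II Pfin by simp
  finally have "AE x in \<mu>. ennreal (h x) - ennreal (Ph x) = 0"
    by (subst (asm) nn_integral_0_iff_AE) (use hm Pm in auto)
  then have AED: "AE x in \<mu>. x \<in> D"
  proof (rule AE_mp, intro AE_I2 impI)
    fix x assume "ennreal (h x) - ennreal (Ph x) = 0"
    then have "h x \<le> Ph x" using Ph0 h0 by (simp add: diff_eq_0_iff_ennreal ennreal_le_iff)
    then show "x \<in> D" using strict[of x] unfolding Ph_def by force
  qed
  have "-D \<in> sets \<mu>" using D sets by simp
  then show ?thesis using AED by (subst (asm) AE_iff_measurable[where N="-D"]) (auto simp: sp)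
qed



definition bar :: "nat \<Rightarrow> nat" where "bar j = (j + 2) mod 4"

lemma bar_lt: "j < 4 \<Longrightarrow> bar j < 4" by (simp add: bar_def)
lemma lt4: "j < (4::nat) \<Longrightarrow> j = 0 \<or> j = 1 \<or> j = 2 \<or> j = 3" by auto
lemma bar_bar: "j < 4 \<Longrightarrow> bar (bar j) = j" unfolding bar_def by presburger
lemma bar_neq: "j < 4 \<Longrightarrow> bar j \<noteq> j" unfolding bar_def by presburger

primrec hhf :: "(nat \<Rightarrow> C2 set) \<Rightarrow> (nat \<Rightarrow> real) \<Rightarrow> (nat \<Rightarrow> C2 \<Rightarrow> C2) \<Rightarrow> nat \<Rightarrow> C2 \<Rightarrow> real" where
  "hhf C \<rho> g 0 z = 1"
| "hhf C \<rho> g (Suc n) z = (\<Sum>j<4. indicator (C j) z * (\<rho> j * hhf C \<rho> g n (g (bar j) z))) + indicator (- (\<Union>j<4. C j)) z"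

lemma tree_h:
  fixes g :: "nat \<Rightarrow> C2 \<Rightarrow> C2" and C :: "nat \<Rightarrow> C2 set" and E :: "C2 \<Rightarrow> real"
    and a \<rho> :: "nat \<Rightarrow> real" and D :: "C2 set"
  assumes gm: "\<And>j. j<4 \<Longrightarrow> g j \<in> borel_measurable borel"
    and Cm: "\<And>j. j<4 \<Longrightarrow> C j \<in> sets borel"
    and disj: "\<And>j k. j<4 \<Longrightarrow> k<4 \<Longrightarrow> j\<noteq>k \<Longrightarrow> C j \<inter> C k = {}"
    and ginv: "\<And>j z. j<4 \<Longrightarrow> g (bar j) (g j z) = z"
    and E0: "\<And>z. E z \<ge> 0"
    and dec: "\<And>j z. j<4 \<Longrightarrow> z \<in> C j \<Longrightarrow> E (g (bar j) z) \<le> E z - 1"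
    and fwd: "\<And>j k z. j<4 \<Longrightarrow> k<4 \<Longrightarrow> k \<noteq> bar j \<Longrightarrow> z \<in> C j \<Longrightarrow> g k z \<in> C k"
    and root: "\<And>z. z \<notin> D \<Longrightarrow> (\<forall>j<4. z \<notin> C j) \<Longrightarrow> \<exists>k<4. g k z \<in> C k"
    and apos: "\<And>k. k<4 \<Longrightarrow> a k > 0" and asum: "(\<Sum>k<4. a k) = 1"
    and \<rho>: "\<And>k. k<4 \<Longrightarrow> 0 < \<rho> k \<and> \<rho> k < 1"
    and cond: "\<And>j. j<4 \<Longrightarrow> (\<Sum>k\<in>{..<4}-{bar j}. a k * \<rho> k) + a (bar j) / \<rho> j < 1"
  shows "\<exists>h. h \<in> borel_measurable borel \<and> (\<forall>z. 0 \<le> h z \<and> h z \<le> 1)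
     \<and> (\<forall>z. (\<Sum>k<4. a k * h (g k z)) \<le> h z) \<and> (\<forall>z. z \<notin> D \<longrightarrow> (\<Sum>k<4. a k * h (g k z)) < h z)"
proof -
  let ?hh = "hhf C \<rho> g"
  have hh_in: "?hh (Suc n) z = \<rho> j * ?hh n (g (bar j) z)" if "j<4" "z \<in> C j" for n z j
  proof -
    have nz: "z \<notin> C i" if "i<4" "i\<noteq>j" for i using disj[of i j] that \<open>j<4\<close> \<open>z \<in> C j\<close> by blast
    have "(\<Sum>i<4. indicator (C i) z * (\<rho> i * ?hh n (g (bar i) z))) = (\<Sum>i\<in>{j}. indicator (C i) z * (\<rho> i * ?hh n (g (bar i) z)))"
      by (rule sum.mono_neutral_right) (use that nz in auto)
    moreover have "z \<notin> - (\<Union>j<4. C j)" using that by auto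
    ultimately show ?thesis using that by simp
  qed
  have hh_out: "?hh n z = 1" if "\<forall>j<4. z \<notin> C j" for n z
  proof (cases n)
    case (Suc m)
    have "(\<Sum>i<4. indicator (C i) z * (\<rho> i * ?hh m (g (bar i) z))) = 0"
      by (rule sum.neutral) (use that in auto)
    then show ?thesis using that Suc by simp
  qed simp
  have hh_pos: "0 < ?hh n z \<and> ?hh n z \<le> 1" for n z
  proof (induction n arbitrary: z)
    case 0 then show ?case by simp
  next
    case (Suc n)
    show ?case
    proof (cases "\<exists>j<4. z \<in> C j")
      case True
      then obtain j where j: "j<4" "z \<in> C j" by blast
      have "0 < \<rho> j * ?hh n (g (bar j) z) \<and> \<rho> j * ?hh n (g (bar j) z) \<le> 1"
        using \<rho>[OF j(1)] Suc[of "g (bar j) z"] by (auto intro: mult_le_one)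
      then show ?thesis using hh_in[OF j] by simp
    next
      case False then show ?thesis using hh_out by auto
    qed
  qed
  define N where "N z = nat \<lceil>E z\<rceil>" for z
  have Npar: "N (g (bar j) z) < N z" if "j<4" "z \<in> C j" for j z
  proof -
    have "E (g (bar j) z) \<le> E z - 1" by (rule dec[OF that])
    then have "\<lceil>E (g (bar j) z)\<rceil> \<le> \<lceil>E z\<rceil> - 1"
      by (metis ceiling_diff_one ceiling_mono)
    moreover have "0 \<le> \<lceil>E (g (bar j) z)\<rceil>" using E0[of "g (bar j) z"] by linarith
    ultimately show ?thesis unfolding N_def by linarith
  qed
  have stab: "?hh n z = ?hh m z" if "N z \<le> n" "N z \<le> m" for n m z
    using that
  proof (induction n arbitrary: m z)
    case 0
    then have "\<forall>j<4. z \<notin> C j" using Npar by fastforce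
    then show ?case using hh_out by simp
  next
    case (Suc n)
    show ?case
    proof (cases "\<exists>j<4. z \<in> C j")
      case True
      then obtain j where j: "j<4" "z \<in> C j" by blast
      have "N z \<ge> 1" using Npar[OF j] by simp
      then obtain m' where m': "m = Suc m'" using Suc.prems by (cases m) auto
      have "?hh n (g (bar j) z) = ?hh m' (g (bar j) z)"
        using Suc.IH Npar[OF j] Suc.prems m' by simp
      then show ?thesis using hh_in[OF j] m' by simp
    next
      case False then show ?thesis using hh_out by auto
    qed
  qed
  define H where "H z = ?hh (N z) z" for z
  have H_eq: "H z = ?hh n z" if "N z \<le> n" for z n
    unfolding H_def by (rule stab) (use that in auto)
  have H_in: "H z = \<rho> j * H (g (bar j) z)" if "j<4" "z \<in> C j" for z j
  proof -
    let ?p = "g (bar j) z"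
    have "H z = ?hh (Suc (N z + N ?p)) z" by (rule H_eq) simp
    also have "\<dots> = \<rho> j * ?hh (N z + N ?p) ?p" by (rule hh_in[OF that])
    also have "?hh (N z + N ?p) ?p = H ?p" by (rule H_eq[symmetric]) simp
    finally show ?thesis .
  qed
  have H_out: "H z = 1" if "\<forall>j<4. z \<notin> C j" for z
    unfolding H_def by (rule hh_out[OF that])
  have H_pos: "0 < H z \<and> H z \<le> 1" for z unfolding H_def by (rule hh_pos)
  have hhm: "?hh n \<in> borel_measurable borel" for n
  proof (induction n)
    case 0 then show ?case by simp
  next
    case (Suc n)
    have c: "(\<lambda>z. ?hh n (g (bar j) z)) \<in> borel_measurable borel" if "j<4" for j
      using measurable_compose[OF gm[OF bar_lt[OF that]] Suc] .
    have U: "- (\<Union>j<4. C j) \<in> sets borel" by (intro borel_comp sets.finite_UN) (auto intro: Cm)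
    show ?case unfolding hhf.simps
      by (intro borel_measurable_add borel_measurable_sum borel_measurable_times
          borel_measurable_indicator Cm c U borel_measurable_const) auto
  qed
  have Hm: "H \<in> borel_measurable borel"
  proof (rule borel_measurable_LIMSEQ_real)
    fix z
    have "eventually (\<lambda>n. ?hh n z = H z) sequentially"
      unfolding eventually_sequentially using H_eq[of z] by (intro exI[of _ "N z"]) (metis)
    then show "(\<lambda>n. ?hh n z) \<longlonglongrightarrow> H z" by (rule tendsto_eventually)
  qed (rule hhm)
  have main: "(\<Sum>k<4. a k * H (g k z)) < H z \<or> ((\<Sum>k<4. a k * H (g k z)) \<le> H z \<and> z \<in> D)" for z
  proof (cases "\<exists>j<4. z \<in> C j")
    case True
    then obtain j where j: "j<4" "z \<in> C j" by blast
    have f: "H (g k z) = \<rho> k * H z" if "k<4" "k \<noteq> bar j" for k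
    proof -
      have "g k z \<in> C k" by (rule fwd[OF j(1) that j(2)])
      then have "H (g k z) = \<rho> k * H (g (bar k) (g k z))" by (rule H_in[OF that(1)])
      then show ?thesis using ginv[OF that(1)] by simp
    qed
    have b: "H (g (bar j) z) = H z / \<rho> j" using H_in[OF j] \<rho>[OF j(1)] by (simp add: field_simps)
    have "(\<Sum>k<4. a k * H (g k z)) = a (bar j) * H (g (bar j) z) + (\<Sum>k\<in>{..<4}-{bar j}. a k * H (g k z))"
      by (rule sum.remove) (auto simp: bar_lt[OF j(1)])
    also have "(\<Sum>k\<in>{..<4}-{bar j}. a k * H (g k z)) = (\<Sum>k\<in>{..<4}-{bar j}. a k * \<rho> k) * H z"
      unfolding sum_distrib_right by (rule sum.cong) (auto simp: f)
    also have "a (bar j) * H (g (bar j) z) = a (bar j) / \<rho> j * H z" using b by simp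
    finally have "(\<Sum>k<4. a k * H (g k z)) = ((\<Sum>k\<in>{..<4}-{bar j}. a k * \<rho> k) + a (bar j) / \<rho> j) * H z"
      by (simp add: algebra_simps)
    also have "\<dots> < 1 * H z" by (rule mult_strict_right_mono[OF cond[OF j(1)]]) (use H_pos in auto)
    finally show ?thesis by simp
  next
    case False
    then have Hz: "H z = 1" using H_out by auto
    have le: "(\<Sum>k<4. a k * H (g k z)) \<le> (\<Sum>k<4. a k)"
      by (rule sum_mono) (use H_pos apos in \<open>auto intro: mult_left_le\<close>)
    show ?thesis
    proof (cases "z \<in> D")
      case True then show ?thesis using le asum Hz by simp
    next
      case nD: False
      obtain k0 where k0: "k0<4" "g k0 z \<in> C k0" using root[OF nD] False by blast
      have "H (g k0 z) = \<rho> k0 * H (g (bar k0) (g k0 z))" by (rule H_in[OF k0])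
      then have Hk: "H (g k0 z) = \<rho> k0" using ginv[OF k0(1)] Hz by simp
      have "(\<Sum>k<4. a k * H (g k z)) = a k0 * H (g k0 z) + (\<Sum>k\<in>{..<4}-{k0}. a k * H (g k z))"
        by (rule sum.remove) (use k0 in auto)
      also have "(\<Sum>k\<in>{..<4}-{k0}. a k * H (g k z)) \<le> (\<Sum>k\<in>{..<4}-{k0}. a k)"
        by (rule sum_mono) (use H_pos apos in \<open>auto intro: mult_left_le\<close>)
      also have "a k0 * H (g k0 z) < a k0" unfolding Hk using apos[OF k0(1)] \<rho>[OF k0(1)] by simp
      also have "a k0 + (\<Sum>k\<in>{..<4}-{k0}. a k) = (\<Sum>k<4. a k)"
        by (rule sum.remove[symmetric]) (use k0 in auto)
      finally show ?thesis using asum Hz by simp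
    qed
  qed
  show ?thesis
    apply (rule exI[of _ H])
    using Hm H_pos main by (auto intro: less_imp_le) (meson less_le_not_le)
qed



lemma pair_ineq:
  fixes u v q rr ss e X Y :: real
  assumes "u + v + q = 1" "0 < rr" "rr = 1 - e * X" "ss = 1 - e * Y"
    and "e * (q * X * Y + u * X^2) < q * Y - X * (v-u)" "e > 0"
  shows "u * rr + q * ss + v/rr < 1"
proof -
  have id: "u * rr^2 + q * ss * rr + v - rr = e * (X * (v-u) - q * Y) + e^2 * (q * X * Y + u * X^2)"
    proof -
    have v: "v = 1 - u - q" using assms(1) by simp
    show ?thesis unfolding v assms(3,4) by (simp add: algebra_simps power2_eq_square)
  qed
  have "e * (e * (q * X * Y + u * X^2)) < e * (q * Y - X * (v-u))" using assms(5,6) by simp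
  then have "u * rr^2 + q * ss * rr + v - rr < 0" unfolding id by (simp add: algebra_simps power2_eq_square)
  moreover have "u * rr + q * ss + v/rr = (u * rr^2 + q * ss * rr + v)/rr" using assms(2) by (simp add: field_simps power2_eq_square)
  ultimately show ?thesis using assms(2) by (simp add: divide_less_eq)
qed

lemma rho_exists:
  fixes a0 a1 a2 a3 :: real
  assumes pos: "a0 > 0" "a1 > 0" "a2 > 0" "a3 > 0" and sum1: "a0 + a1 + a2 + a3 = 1"
  shows "\<exists>r s. 0 < r \<and> r < 1 \<and> 0 < s \<and> s < 1
    \<and> a0 * r + a1 * s + a3 * s + a2 / r < 1 \<and> a2 * r + a1 * s + a3 * s + a0 / r < 1
    \<and> a0 * r + a2 * r + a1 * s + a3 / s < 1 \<and> a0 * r + a2 * r + a3 * s + a1 / s < 1"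
proof -
  define p where "p = a0 + a2"
  define q where "q = a1 + a3"
  define dA where "dA = \<bar>a0 - a2\<bar>"
  define dB where "dB = \<bar>a1 - a3\<bar>"
  define X where "X = 2 * q"
  define Y where "Y = p + dA"
  define cA where "cA = q * (p - dA)"
  define KA where "KA = q * X * Y + X^2"
  define cB where "cB = 2 * p * q - (p + dA) * dB"
  define KB where "KB = p * X * Y + Y^2"
  define e where "e = min (min (cA/KA) (cB/KB)) (min (1/X) (1/Y)) / 2"
  have p: "p > 0" and q: "q > 0" using pos unfolding p_def q_def by auto
  have dA: "0 \<le> dA" "dA < p" using pos unfolding dA_def p_def by auto
  have dB: "0 \<le> dB" "dB < q" using pos unfolding dB_def q_def by auto
  have X: "X > 0" and Y: "Y > 0" using p q dA unfolding X_def Y_def by auto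
  have cA: "cA > 0" using q dA unfolding cA_def by simp
  have KA: "KA > 0" using q X Y unfolding KA_def by (simp add: add_pos_pos)
  have KB: "KB > 0" using p X Y unfolding KB_def by (simp add: add_pos_pos)
  have "(p + dA) * dB \<le> (p + dA) * q" using dA dB p by (intro mult_left_mono) auto
  also have "\<dots> < (2 * p) * q" using dA q by (intro mult_strict_right_mono) auto
  finally have cB: "cB > 0" unfolding cB_def by simp
  have e: "e > 0" unfolding e_def using cA KA cB KB X Y by simp
  have eA: "e * KA < cA"
  proof -
    have "e \<le> (cA/KA)/2" unfolding e_def by (auto intro!: divide_right_mono simp: min_le_iff_disj)
    then have "e * KA \<le> (cA/KA)/2 * KA" using KA by (intro mult_right_mono) auto
    also have "\<dots> = cA/2" using KA by simp
    finally show ?thesis using cA by linarith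
  qed
  have eB: "e * KB < cB"
  proof -
    have "e \<le> (cB/KB)/2" unfolding e_def by (auto intro!: divide_right_mono simp: min_le_iff_disj)
    then have "e * KB \<le> (cB/KB)/2 * KB" using KB by (intro mult_right_mono) auto
    also have "\<dots> = cB/2" using KB by simp
    finally show ?thesis using cB by linarith
  qed
  have eX: "e * X < 1"
  proof -
    have "e \<le> (1/X)/2" unfolding e_def by (auto intro!: divide_right_mono simp: min_le_iff_disj)
    then have "e * X \<le> (1/X)/2 * X" using X by (intro mult_right_mono) auto
    then show ?thesis using X by simp
  qed
  have eY: "e * Y < 1"
  proof -
    have "e \<le> (1/Y)/2" unfolding e_def by (auto intro!: divide_right_mono simp: min_le_iff_disj)
    then have "e * Y \<le> (1/Y)/2 * Y" using Y by (intro mult_right_mono) auto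
    then show ?thesis using Y by simp
  qed
  define r where "r = 1 - e * X"
  define s where "s = 1 - e * Y"
  have r: "0 < r" "r < 1" using eX e X unfolding r_def by auto
  have s: "0 < s" "s < 1" using eY e Y unfolding s_def by auto
  have a1le: "a0 \<le> 1" "a1 \<le> 1" "a2 \<le> 1" "a3 \<le> 1" using pos sum1 by auto
  have X2: "X^2 > 0" "Y^2 > 0" using X Y by auto
  have A: "u * r + q * s + v / r < 1" if uv: "u + v = p" "u > 0" "u \<le> 1" "v - u \<le> dA" for u v
  proof (rule pair_ineq[where e=e and X=X and Y=Y])
    show "u + v + q = 1" using uv sum1 unfolding p_def q_def by simp
    have "e * (q * X * Y + u * X^2) \<le> e * KA" unfolding KA_def
      using e uv X2 by (intro mult_left_mono add_left_mono) (auto intro: mult_left_le_one_le)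
    also have "\<dots> < cA" by (rule eA)
    also have "cA \<le> q * Y - X * (v - u)" unfolding cA_def Y_def X_def
      using mult_left_mono[OF uv(4), of q] q by (simp add: algebra_simps)
    finally show "e * (q * X * Y + u * X^2) < q * Y - X * (v - u)" .
  qed (use r e in \<open>auto simp: r_def s_def\<close>)
  have B: "u * s + p * r + v / s < 1" if uv: "u + v = q" "u > 0" "u \<le> 1" "v - u \<le> dB" for u v
  proof (rule pair_ineq[where e=e and X=Y and Y=X])
    show "u + v + p = 1" using uv sum1 unfolding p_def q_def by simp
    have "e * (p * Y * X + u * Y^2) \<le> e * KB" unfolding KB_def
      using e uv X2 by (intro mult_left_mono add_left_mono) (auto simp: mult.commute mult.left_commute intro: mult_left_le_one_le)
    also have "\<dots> < cB" by (rule eB)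
    also have "cB \<le> p * X - Y * (v - u)" unfolding cB_def Y_def X_def
      using mult_right_mono[OF uv(4), of "p + dA"] p dA by (simp add: algebra_simps)
    finally show "e * (p * Y * X + u * Y^2) < p * X - Y * (v - u)" .
  qed (use s e in \<open>auto simp: r_def s_def\<close>)
  have 1: "a0 * r + a1 * s + a3 * s + a2 / r < 1"
    using A[of a0 a2] pos a1le unfolding p_def dA_def q_def by (simp add: algebra_simps)
  have 2: "a2 * r + a1 * s + a3 * s + a0 / r < 1"
    using A[of a2 a0] pos a1le unfolding p_def dA_def q_def by (simp add: algebra_simps)
  have 3: "a0 * r + a2 * r + a1 * s + a3 / s < 1"
    using B[of a1 a3] pos a1le unfolding p_def dB_def q_def by (simp add: algebra_simps)
  have 4: "a0 * r + a2 * r + a3 * s + a1 / s < 1"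
    using B[of a3 a1] pos a1le unfolding p_def dB_def q_def by (simp add: algebra_simps)
  show ?thesis using r s 1 2 3 4 by blast
qed



lemma poly_grow:
  fixes Q :: "complex poly" and K B :: real
  assumes deg: "degree Q \<ge> 2" and K: "K \<ge> 0" and B: "B \<ge> 0"
  shows "\<exists>R\<ge>1. \<forall>x y. R \<le> norm x \<and> norm (y - poly Q x) \<le> K * norm x \<longrightarrow> B * norm x \<le> norm y"
proof -
  obtain a Q1 where Q: "Q = pCons a Q1" by (cases Q) auto
  have "Q1 \<noteq> 0" using deg Q by auto
  then have "degree Q1 \<ge> 1" using deg Q by auto
  obtain b Q2 where Q1: "Q1 = pCons b Q2" by (cases Q1) auto
  have Q2: "Q2 \<noteq> 0" using \<open>degree Q1 \<ge> 1\<close> Q1 by auto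
  obtain r where r: "\<And>z. r \<le> norm z \<Longrightarrow> B + K + norm a + 1 \<le> norm (poly (pCons b Q2) z)"
    using poly_infinity[OF Q2, of "B + K + norm a + 1" b] by blast
  show ?thesis
  proof (intro exI[of _ "max r 1"] conjI allI impI)
    fix x y assume h: "max r 1 \<le> norm x \<and> norm (y - poly Q x) \<le> K * norm x"
    have x1: "norm x \<ge> 1" and xr: "norm x \<ge> r" using h by auto
    have pq: "poly Q x = a + x * poly (pCons b Q2) x" using Q Q1 by simp
    have "norm (x * poly (pCons b Q2) x) \<ge> norm x * (B + K + norm a + 1)"
      using r[OF xr] by (simp add: norm_mult mult_left_mono)
    then have "norm (x * poly (pCons b Q2) x) \<ge> (B + K) * norm x + norm a"
    proof -
      have "norm x * (norm a + 1) \<ge> 1 * (norm a + 1)" using x1 by (intro mult_right_mono) auto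
      then have "norm x * (B + K + norm a + 1) \<ge> (B + K) * norm x + norm a" by (simp add: algebra_simps)
      then show ?thesis using \<open>norm (x * poly (pCons b Q2) x) \<ge> norm x * (B + K + norm a + 1)\<close> by linarith
    qed
    moreover have "norm (poly Q x) \<ge> norm (x * poly (pCons b Q2) x) - norm a"
      unfolding pq by (metis add.commute diff_add_cancel norm_diff_ineq)
    moreover have "norm y \<ge> norm (poly Q x) - norm (y - poly Q x)"
      by (metis norm_minus_commute norm_triangle_ineq2 diff_le_eq add.commute le_diff_eq)
    ultimately show "B * norm x \<le> norm y" using h by (simp add: algebra_simps)
  qed simp
qed

lemma rot_norm: "norm (rot \<phi> z) = norm z"
proof -
  obtain x y where z: "z = (x, y)" by (cases z)
  let ?c = "cos \<phi>" and ?s = "sin \<phi>"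
  let ?u = "complex_of_real ?c * x - complex_of_real ?s * y" and ?v = "complex_of_real ?s * x + complex_of_real ?c * y"
  have u: "(cmod ?u)^2 = (?c * Re x - ?s * Re y)^2 + (?c * Im x - ?s * Im y)^2" by (simp add: cmod_power2)
  have v: "(cmod ?v)^2 = (?s * Re x + ?c * Re y)^2 + (?s * Im x + ?c * Im y)^2" by (simp add: cmod_power2)
  have sc: "?s^2 + ?c^2 = 1" by (rule sin_cos_squared_add)
  have "(?c * Re x - ?s * Re y)^2 + (?c * Im x - ?s * Im y)^2 + ((?s * Re x + ?c * Re y)^2 + (?s * Im x + ?c * Im y)^2)
      = ((Re x)^2 + (Im x)^2) + ((Re y)^2 + (Im y)^2)" using sc by algebra
  then have "(cmod ?u)^2 + (cmod ?v)^2 = (cmod x)^2 + (cmod y)^2" unfolding u v by (simp add: cmod_power2)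
  then show ?thesis unfolding z rot_def by (simp add: norm_Pair)
qed

lemma rot_inv: "rot (-\<phi>) (rot \<phi> z) = z"
proof -
  obtain x y where z: "z = (x, y)" by (cases z)
  have c: "complex_of_real (cos \<phi>) * complex_of_real (cos \<phi>) + complex_of_real (sin \<phi>) * complex_of_real (sin \<phi>) = 1"
    by (metis of_real_mult of_real_add of_real_1 sin_cos_squared_add power2_eq_square add.commute)
  have "rot (-\<phi>) (rot \<phi> z) = ((complex_of_real (cos \<phi>) * complex_of_real (cos \<phi>) + complex_of_real (sin \<phi>) * complex_of_real (sin \<phi>)) * x,
        (complex_of_real (cos \<phi>) * complex_of_real (cos \<phi>) + complex_of_real (sin \<phi>) * complex_of_real (sin \<phi>)) * y)"
    unfolding z rot_def by (simp add: algebra_simps)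
  then show ?thesis using c z by simp
qed

lemma rot_inv': "rot \<phi> (rot (-\<phi>) z) = z"
  using rot_inv[of "-\<phi>" z] by simp

lemma rot_balanced:
  fixes m B R1 :: real
  assumes m: "m > 0" "\<bar>sin \<phi>\<bar> \<ge> m" "\<bar>cos \<phi>\<bar> \<ge> m" and B: "B \<ge> 2/m"
    and xy: "(norm x \<le> norm y / B \<and> norm y \<ge> 2*R1/m) \<or> (norm y \<le> norm x / B \<and> norm x \<ge> 2*R1/m)"
    and w: "rot \<phi> (x, y) = (u, v)"
  shows "norm u \<le> (4/m) * norm v \<and> norm v \<le> (4/m) * norm u \<and> R1 \<le> norm u \<and> R1 \<le> norm v"
proof -
  have u: "u = complex_of_real (cos \<phi>) * x - complex_of_real (sin \<phi>) * y"
   and v: "v = complex_of_real (sin \<phi>) * x + complex_of_real (cos \<phi>) * y" using w by (auto simp: rot_def)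
  have "2/m > 0" using m by simp
  then have Bp: "B > 0" using B by linarith
  have Bm: "0 < B * 2 / m" using Bp m by simp
  have m1: "m \<le> 1" using m(2) abs_sin_le_one order_trans by blast
  have sc1: "\<bar>sin \<phi>\<bar> \<le> 1" "\<bar>cos \<phi>\<bar> \<le> 1" by auto
  let ?A = "complex_of_real (cos \<phi>) * x" and ?B = "complex_of_real (sin \<phi>) * y"
  let ?A' = "complex_of_real (sin \<phi>) * x" and ?B' = "complex_of_real (cos \<phi>) * y"
  have nA: "norm ?A = \<bar>cos \<phi>\<bar> * norm x" "norm ?B = \<bar>sin \<phi>\<bar> * norm y"
    "norm ?A' = \<bar>sin \<phi>\<bar> * norm x" "norm ?B' = \<bar>cos \<phi>\<bar> * norm y" by (simp_all add: norm_mult)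
  have t1: "norm ?A - norm ?B \<le> norm (?A - ?B)" by (rule norm_triangle_ineq2)
  have t2: "norm ?B - norm ?A \<le> norm (?A - ?B)" by (metis norm_triangle_ineq2 norm_minus_commute)
  have t3: "norm (?A - ?B) \<le> norm ?A + norm ?B" by (rule norm_triangle_ineq4)
  have t4: "norm ?A' - norm ?B' \<le> norm (?A' + ?B')" by (metis norm_diff_ineq)
  have t5: "norm ?B' - norm ?A' \<le> norm (?A' + ?B')" by (metis norm_diff_ineq add.commute)
  have t6: "norm (?A' + ?B') \<le> norm ?A' + norm ?B'" by (rule norm_triangle_ineq)
  have nu: "norm u \<ge> \<bar>cos \<phi>\<bar> * norm x - \<bar>sin \<phi>\<bar> * norm y" "norm u \<ge> \<bar>sin \<phi>\<bar> * norm y - \<bar>cos \<phi>\<bar> * norm x"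
    "norm u \<le> \<bar>cos \<phi>\<bar> * norm x + \<bar>sin \<phi>\<bar> * norm y"
    unfolding u using t1 t2 t3 nA by linarith+
  have nv: "norm v \<ge> \<bar>sin \<phi>\<bar> * norm x - \<bar>cos \<phi>\<bar> * norm y" "norm v \<ge> \<bar>cos \<phi>\<bar> * norm y - \<bar>sin \<phi>\<bar> * norm x"
    "norm v \<le> \<bar>sin \<phi>\<bar> * norm x + \<bar>cos \<phi>\<bar> * norm y"
    unfolding v using t4 t5 t6 nA by linarith+
  from xy show ?thesis
  proof
    assume h: "norm x \<le> norm y / B \<and> norm y \<ge> 2*R1/m"
    have "norm y / B \<le> norm y / (2/m)" using B m Bm by (intro divide_left_mono) auto
    moreover have "norm y / (2/m) = m/2 * norm y" by simp
    ultimately have x: "norm x \<le> m/2 * norm y" using h by linarith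
    have y0: "norm y \<ge> 0" by simp
    have R: "R1 \<le> m/2 * norm y" using h m by (simp add: field_simps)
    have a1: "\<bar>cos \<phi>\<bar> * norm x \<le> m/2 * norm y" using x sc1 by (meson mult_left_le_one_le norm_ge_zero order_trans abs_ge_zero)
    have a2: "\<bar>sin \<phi>\<bar> * norm x \<le> m/2 * norm y" using x sc1 by (meson mult_left_le_one_le norm_ge_zero order_trans abs_ge_zero)
    have b1: "\<bar>sin \<phi>\<bar> * norm y \<ge> m * norm y" using m y0 by (simp add: mult_right_mono)
    have b2: "\<bar>cos \<phi>\<bar> * norm y \<ge> m * norm y" using m y0 by (simp add: mult_right_mono)
    have b3: "\<bar>sin \<phi>\<bar> * norm y \<le> norm y" "\<bar>cos \<phi>\<bar> * norm y \<le> norm y" using sc1 y0 by (auto intro: mult_left_le_one_le)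
    have lo: "norm u \<ge> m/2 * norm y" "norm v \<ge> m/2 * norm y" using nu nv a1 a2 b1 b2 by linarith+
    have mm: "m/2 * norm y \<le> norm y" using mult_right_mono[OF m1 y0] m y0 times_divide_eq_left[of m 2 "norm y"] by linarith
    have hi: "norm u \<le> 2 * norm y" "norm v \<le> 2 * norm y" using nu nv a1 a2 b3 mm by linarith+
    have eq2: "2 * norm y = (4/m) * (m/2 * norm y)" using m by simp
    have "(4/m) * (m/2 * norm y) \<le> (4/m) * norm v" "(4/m) * (m/2 * norm y) \<le> (4/m) * norm u"
      by (rule mult_left_mono[OF lo(2)], use m in simp, rule mult_left_mono[OF lo(1)], use m in simp)
    then have "norm u \<le> (4/m) * norm v" "norm v \<le> (4/m) * norm u"
      using hi eq2 by linarith+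
    then show ?thesis using lo R by linarith
  next
    assume h: "norm y \<le> norm x / B \<and> norm x \<ge> 2*R1/m"
    have "norm x / B \<le> norm x / (2/m)" using B m Bm by (intro divide_left_mono) auto
    moreover have "norm x / (2/m) = m/2 * norm x" by simp
    ultimately have y: "norm y \<le> m/2 * norm x" using h by linarith
    have x0: "norm x \<ge> 0" by simp
    have R: "R1 \<le> m/2 * norm x" using h m by (simp add: field_simps)
    have a1: "\<bar>cos \<phi>\<bar> * norm y \<le> m/2 * norm x" using y sc1 by (meson mult_left_le_one_le norm_ge_zero order_trans abs_ge_zero)
    have a2: "\<bar>sin \<phi>\<bar> * norm y \<le> m/2 * norm x" using y sc1 by (meson mult_left_le_one_le norm_ge_zero order_trans abs_ge_zero)
    have b1: "\<bar>sin \<phi>\<bar> * norm x \<ge> m * norm x" using m x0 by (simp add: mult_right_mono)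
    have b2: "\<bar>cos \<phi>\<bar> * norm x \<ge> m * norm x" using m x0 by (simp add: mult_right_mono)
    have b3: "\<bar>sin \<phi>\<bar> * norm x \<le> norm x" "\<bar>cos \<phi>\<bar> * norm x \<le> norm x" using sc1 x0 by (auto intro: mult_left_le_one_le)
    have lo: "norm u \<ge> m/2 * norm x" "norm v \<ge> m/2 * norm x" using nu nv a1 a2 b1 b2 by linarith+
    have mm: "m/2 * norm x \<le> norm x" using mult_right_mono[OF m1 x0] m x0 times_divide_eq_left[of m 2 "norm x"] by linarith
    have hi: "norm u \<le> 2 * norm x" "norm v \<le> 2 * norm x" using nu nv a1 a2 b3 mm by linarith+
    have eq2: "2 * norm x = (4/m) * (m/2 * norm x)" using m by simp
    have "(4/m) * (m/2 * norm x) \<le> (4/m) * norm v" "(4/m) * (m/2 * norm x) \<le> (4/m) * norm u"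
      by (rule mult_left_mono[OF lo(2)], use m in simp, rule mult_left_mono[OF lo(1)], use m in simp)
    then have "norm u \<le> (4/m) * norm v" "norm v \<le> (4/m) * norm u"
      using hi eq2 by linarith+
    then show ?thesis using lo R by linarith
  qed
qed




definition h1i :: "complex poly \<Rightarrow> complex \<Rightarrow> C2 \<Rightarrow> C2" where
  "h1i P \<delta> = (\<lambda>(x, y). ((poly P x - y) / \<delta>, x))"

lemma henon_h1i: "\<delta> \<noteq> 0 \<Longrightarrow> henon P \<delta> (h1i P \<delta> z) = z"
  by (cases z) (simp add: henon_def h1i_def)
lemma h1i_henon: "\<delta> \<noteq> 0 \<Longrightarrow> h1i P \<delta> (henon P \<delta> z) = z"
  by (cases z) (simp add: henon_def h1i_def)

lemma inv_henon: "\<delta> \<noteq> 0 \<Longrightarrow> inv (henon P \<delta>) = h1i P \<delta>"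
  by (rule inv_unique_comp) (auto simp: fun_eq_iff henon_h1i h1i_henon)

lemma inv_rot: "inv (rot \<theta>) = rot (-\<theta>)"
  by (rule inv_unique_comp) (auto simp: fun_eq_iff rot_inv rot_inv')

lemma inv_h2: "\<delta> \<noteq> 0 \<Longrightarrow> inv (rot (-\<theta>) \<circ> henon P \<delta> \<circ> rot \<theta>) = rot (-\<theta>) \<circ> h1i P \<delta> \<circ> rot \<theta>"
  by (rule inv_unique_comp) (auto simp: fun_eq_iff rot_inv rot_inv' henon_h1i h1i_henon)

lemma henon_alt: "henon P \<delta> = (\<lambda>z. (snd z, poly P (snd z) - \<delta> * fst z))"
  by (auto simp: henon_def fun_eq_iff)
lemma h1i_alt: "h1i P \<delta> = (\<lambda>z. ((poly P (fst z) - snd z) / \<delta>, fst z))"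
  by (auto simp: h1i_def fun_eq_iff)
lemma rot_alt: "rot \<theta> = (\<lambda>z. (complex_of_real (cos \<theta>) * fst z - complex_of_real (sin \<theta>) * snd z,
                       complex_of_real (sin \<theta>) * fst z + complex_of_real (cos \<theta>) * snd z))"
  by (auto simp: rot_def fun_eq_iff)

lemma cont_henon: "continuous_on UNIV (henon P \<delta>)"
  unfolding henon_alt by (intro continuous_intros)
lemma cont_h1i: "continuous_on UNIV (h1i P \<delta>)"
  unfolding h1i_alt divide_inverse by (intro continuous_intros)
lemma cont_rot: "continuous_on UNIV (rot \<theta>)"
  unfolding rot_alt by (intro continuous_intros)

lemma meas_henon: "henon P \<delta> \<in> borel_measurable borel"
  by (rule borel_measurable_continuous_onI[OF cont_henon])
lemma meas_h1i: "h1i P \<delta> \<in> borel_measurable borel"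
  by (rule borel_measurable_continuous_onI[OF cont_h1i])
lemma meas_rot: "rot \<theta> \<in> borel_measurable borel"
  by (rule borel_measurable_continuous_onI[OF cont_rot])

definition CH :: "complex poly \<Rightarrow> complex \<Rightarrow> real \<Rightarrow> real \<Rightarrow> C2 set" where
  "CH P \<delta> Mp R1 = {z. R1 \<le> norm (fst z) \<and> norm (snd z - poly P (fst z)) \<le> Mp * norm \<delta> * norm (fst z)}"
definition CHi :: "complex poly \<Rightarrow> complex \<Rightarrow> real \<Rightarrow> real \<Rightarrow> C2 set" where
  "CHi P \<delta> Mp R1 = {z. R1 \<le> norm (snd z) \<and> norm (\<delta> * fst z - poly P (snd z)) \<le> Mp * norm (snd z)}"

lemma closed_CH: "closed (CH P \<delta> Mp R1)"
  unfolding CH_def by (intro closed_Collect_conj closed_Collect_le continuous_intros)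
lemma closed_CHi: "closed (CHi P \<delta> Mp R1)"
  unfolding CHi_def by (intro closed_Collect_conj closed_Collect_le continuous_intros)




definition bal :: "real \<Rightarrow> real \<Rightarrow> C2 \<Rightarrow> bool" where
  "bal Mp R1 z \<longleftrightarrow> norm (fst z) \<le> Mp * norm (snd z) \<and> norm (snd z) \<le> Mp * norm (fst z) \<and> R1 \<le> norm (fst z) \<and> R1 \<le> norm (snd z)"

context
  fixes P :: "complex poly" and \<delta> :: complex and \<theta> m Mp B R1 :: real
  assumes \<delta>: "\<delta> \<noteq> 0" and m: "m > 0" "\<bar>sin \<theta>\<bar> \<ge> m" "\<bar>cos \<theta>\<bar> \<ge> m"
    and Mp: "Mp = 4/m" and B: "B = Mp + 2/m + 3" and R1: "R1 \<ge> 1"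
    and growA: "\<And>x y. R1 \<le> norm x \<Longrightarrow> norm (y - poly P x) \<le> (Mp * norm \<delta>) * norm x \<Longrightarrow> B * norm x \<le> norm y"
    and growB: "\<And>x y. R1 \<le> norm y \<Longrightarrow> norm (\<delta> * x - poly P y) \<le> Mp * norm y \<Longrightarrow> B * norm y \<le> norm x"
begin

lemma m1: "m \<le> 1" using m(2) abs_sin_le_one order_trans by blast
lemma Mp4: "Mp \<ge> 4" using m m1 unfolding Mp by (simp add: field_simps)
lemma B_facts: "B > Mp" "B \<ge> 2/m" "B \<ge> Mp + 3" "B > 1"
proof -
  have "2/m > 0" using m by simp
  then show "B > Mp" "B \<ge> 2/m" "B \<ge> Mp + 3" "B > 1" using Mp4 unfolding B by linarith+
qed

lemma F_CH: "z \<in> CH P \<delta> Mp R1 \<Longrightarrow> B * norm (fst z) \<le> norm (snd z) \<and> R1 \<le> norm (fst z)"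
  unfolding CH_def using growA by auto
lemma F_CHi: "z \<in> CHi P \<delta> Mp R1 \<Longrightarrow> B * norm (snd z) \<le> norm (fst z) \<and> R1 \<le> norm (snd z)"
  unfolding CHi_def using growB by auto

lemma L1: "norm (fst z) \<le> Mp * norm (snd z) \<Longrightarrow> R1 \<le> norm (snd z) \<Longrightarrow> henon P \<delta> z \<in> CH P \<delta> Mp R1"
proof -
  assume a: "norm (fst z) \<le> Mp * norm (snd z)" "R1 \<le> norm (snd z)"
  have "norm \<delta> * norm (fst z) \<le> norm \<delta> * (Mp * norm (snd z))" using a by (intro mult_left_mono) auto
  then show ?thesis using a unfolding CH_def henon_alt by (simp add: norm_mult algebra_simps)
qed

lemma L1': "norm (snd z) \<le> Mp * norm (fst z) \<Longrightarrow> R1 \<le> norm (fst z) \<Longrightarrow> h1i P \<delta> z \<in> CHi P \<delta> Mp R1"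
  unfolding CHi_def h1i_alt using \<delta> by (simp add: norm_minus_commute)

lemma bal_fwd: "bal Mp R1 z \<Longrightarrow> henon P \<delta> z \<in> CH P \<delta> Mp R1 \<and> h1i P \<delta> z \<in> CHi P \<delta> Mp R1"
  unfolding bal_def using L1 L1' by blast

lemma CH_self: "z \<in> CH P \<delta> Mp R1 \<Longrightarrow> henon P \<delta> z \<in> CH P \<delta> Mp R1"
proof -
  assume z: "z \<in> CH P \<delta> Mp R1"
  then have f: "B * norm (fst z) \<le> norm (snd z)" "R1 \<le> norm (fst z)" using F_CH by auto
  have "Mp * norm (fst z) \<le> B * norm (fst z)" using B_facts by (intro mult_right_mono) auto
  moreover have "norm (fst z) \<le> Mp * norm (fst z)" using Mp4 by (simp add: mult_le_cancel_right1)
  moreover have "norm (snd z) \<le> Mp * norm (snd z)" using Mp4 by (simp add: mult_le_cancel_right1)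
  moreover have "norm (fst z) \<le> Mp * norm (fst z)" using Mp4 by (simp add: mult_le_cancel_right1)
  moreover have "R1 \<le> B * R1" using B_facts R1 by (simp add: mult_le_cancel_right1)
  moreover have "B * R1 \<le> B * norm (fst z)" using f B_facts by (intro mult_left_mono) auto
  ultimately show ?thesis using f by (intro L1) linarith+
qed

lemma CHi_self: "z \<in> CHi P \<delta> Mp R1 \<Longrightarrow> h1i P \<delta> z \<in> CHi P \<delta> Mp R1"
proof -
  assume z: "z \<in> CHi P \<delta> Mp R1"
  then have f: "B * norm (snd z) \<le> norm (fst z)" "R1 \<le> norm (snd z)" using F_CHi by auto
  have "Mp * norm (snd z) \<le> B * norm (snd z)" using B_facts by (intro mult_right_mono) auto
  moreover have "norm (snd z) \<le> Mp * norm (snd z)" using Mp4 by (simp add: mult_le_cancel_right1)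
  moreover have "norm (fst z) \<le> Mp * norm (fst z)" using Mp4 by (simp add: mult_le_cancel_right1)
  moreover have "R1 \<le> B * R1" using B_facts R1 by (simp add: mult_le_cancel_right1)
  moreover have "B * R1 \<le> B * norm (snd z)" using f B_facts by (intro mult_left_mono) auto
  ultimately show ?thesis using f by (intro L1') linarith+
qed

lemma rotbal:
  assumes z: "z \<in> CH P \<delta> Mp R1 \<or> z \<in> CHi P \<delta> Mp R1" and \<phi>: "\<phi> = \<theta> \<or> \<phi> = -\<theta>"
  shows "bal Mp R1 (rot \<phi> z)"
proof -
  obtain x y where xy: "z = (x, y)" by (cases z)
  obtain u v where uv: "rot \<phi> (x, y) = (u, v)" by (cases "rot \<phi> (x, y)")
  have ms: "\<bar>sin \<phi>\<bar> \<ge> m" "\<bar>cos \<phi>\<bar> \<ge> m" using \<phi> m by auto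
  have Bp: "B > 0" using B_facts by simp
  have R1B: "2 * R1 / m \<le> B * R1" using B_facts R1 m
    by (metis mult.commute mult_right_mono times_divide_eq_left order_trans dual_order.refl zero_le_one less_imp_le)
  have "(norm x \<le> norm y / B \<and> norm y \<ge> 2*R1/m) \<or> (norm y \<le> norm x / B \<and> norm x \<ge> 2*R1/m)"
  proof (cases "z \<in> CH P \<delta> Mp R1")
    case True
    then have f: "B * norm x \<le> norm y" "R1 \<le> norm x" using F_CH xy by auto
    have "B * R1 \<le> B * norm x" using f Bp by (intro mult_left_mono) auto
    then have "norm y \<ge> 2*R1/m" using f R1B by linarith
    moreover have "norm x \<le> norm y / B" using f Bp by (simp add: field_simps)
    ultimately show ?thesis by blast
  next
    case False
    then have "z \<in> CHi P \<delta> Mp R1" using z by auto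
    then have f: "B * norm y \<le> norm x" "R1 \<le> norm y" using F_CHi xy by auto
    have "B * R1 \<le> B * norm y" using f Bp by (intro mult_left_mono) auto
    then have "norm x \<ge> 2*R1/m" using f R1B by linarith
    moreover have "norm y \<le> norm x / B" using f Bp by (simp add: field_simps)
    ultimately show ?thesis by blast
  qed
  from rot_balanced[OF m(1) ms B_facts(2) this uv]
  show ?thesis unfolding bal_def xy uv Mp by simp
qed

lemma notbal_CH: "z \<in> CH P \<delta> Mp R1 \<Longrightarrow> \<not> bal Mp R1 z"
proof
  assume z: "z \<in> CH P \<delta> Mp R1" and b: "bal Mp R1 z"
  then have f: "B * norm (fst z) \<le> norm (snd z)" "R1 \<le> norm (fst z)" using F_CH by auto
  have "norm (snd z) \<le> Mp * norm (fst z)" using b unfolding bal_def by auto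
  moreover have "Mp * norm (fst z) < B * norm (fst z)" using B_facts f R1 by (intro mult_strict_right_mono) auto
  ultimately show False using f by linarith
qed

lemma notbal_CHi: "z \<in> CHi P \<delta> Mp R1 \<Longrightarrow> \<not> bal Mp R1 z"
proof
  assume z: "z \<in> CHi P \<delta> Mp R1" and b: "bal Mp R1 z"
  then have f: "B * norm (snd z) \<le> norm (fst z)" "R1 \<le> norm (snd z)" using F_CHi by auto
  have "norm (fst z) \<le> Mp * norm (snd z)" using b unfolding bal_def by auto
  moreover have "Mp * norm (snd z) < B * norm (snd z)" using B_facts f R1 by (intro mult_strict_right_mono) auto
  ultimately show False using f by linarith
qed

lemma CH_CHi: "z \<in> CH P \<delta> Mp R1 \<Longrightarrow> z \<notin> CHi P \<delta> Mp R1"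
proof
  assume a: "z \<in> CH P \<delta> Mp R1" "z \<in> CHi P \<delta> Mp R1"
  then have f: "B * norm (fst z) \<le> norm (snd z)" "R1 \<le> norm (fst z)" "B * norm (snd z) \<le> norm (fst z)"
    using F_CH F_CHi by auto
  have "1 * norm (fst z) \<le> B * norm (fst z)" using B_facts by (intro mult_right_mono) auto
  moreover have "B * R1 \<le> B * norm (fst z)" using B_facts f by (intro mult_left_mono) auto
  moreover have "0 < B * R1" using B_facts R1 by simp
  ultimately have y0: "norm (snd z) > 0" using f by linarith
  have "1 * norm (snd z) < B * norm (snd z)" using B_facts y0 by (intro mult_strict_right_mono) auto
  then show False using f \<open>1 * norm (fst z) \<le> B * norm (fst z)\<close> by linarith
qed

lemma decA: "z \<in> CH P \<delta> Mp R1 \<Longrightarrow> norm (h1i P \<delta> z) \<le> norm z - 1"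
proof -
  assume z: "z \<in> CH P \<delta> Mp R1"
  then have f: "B * norm (fst z) \<le> norm (snd z)" "R1 \<le> norm (fst z)" using F_CH by auto
  have c: "norm (snd z - poly P (fst z)) \<le> Mp * norm \<delta> * norm (fst z)" using z unfolding CH_def by auto
  have "norm ((poly P (fst z) - snd z) / \<delta>) = norm (snd z - poly P (fst z)) / norm \<delta>"
    by (simp add: norm_divide norm_minus_commute)
  also have "\<dots> \<le> Mp * norm \<delta> * norm (fst z) / norm \<delta>" using c \<delta> by (intro divide_right_mono) auto
  also have "\<dots> = Mp * norm (fst z)" using \<delta> by simp
  finally have a: "norm ((poly P (fst z) - snd z) / \<delta>) \<le> Mp * norm (fst z)" .
  have "norm (h1i P \<delta> z) \<le> norm ((poly P (fst z) - snd z) / \<delta>) + norm (fst z)"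
    unfolding h1i_alt by (rule norm_Pair_le)
  also have "\<dots> \<le> (Mp + 1) * norm (fst z)" using a by (simp add: algebra_simps)
  also have "\<dots> \<le> B * norm (fst z) - 1"
  proof -
    have "(Mp + 3) * norm (fst z) \<le> B * norm (fst z)" using B_facts by (intro mult_right_mono) auto
    then show ?thesis using f R1 by (simp add: algebra_simps)
  qed
  also have "\<dots> \<le> norm z - 1" using f norm_snd_le[of "snd z" "fst z", unfolded prod.collapse] by simp
  finally show ?thesis .
qed

lemma decB: "z \<in> CHi P \<delta> Mp R1 \<Longrightarrow> norm (henon P \<delta> z) \<le> norm z - 1"
proof -
  assume z: "z \<in> CHi P \<delta> Mp R1"
  then have f: "B * norm (snd z) \<le> norm (fst z)" "R1 \<le> norm (snd z)" using F_CHi by auto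
  have c: "norm (poly P (snd z) - \<delta> * fst z) \<le> Mp * norm (snd z)" using z unfolding CHi_def by (auto simp: norm_minus_commute)
  have "norm (henon P \<delta> z) \<le> norm (snd z) + norm (poly P (snd z) - \<delta> * fst z)"
    unfolding henon_alt by (rule norm_Pair_le)
  also have "\<dots> \<le> (Mp + 1) * norm (snd z)" using c by (simp add: algebra_simps)
  also have "\<dots> \<le> B * norm (snd z) - 1"
  proof -
    have "(Mp + 3) * norm (snd z) \<le> B * norm (snd z)" using B_facts by (intro mult_right_mono) auto
    then show ?thesis using f R1 by (simp add: algebra_simps)
  qed
  also have "\<dots> \<le> norm z - 1" using f norm_fst_le[of "fst z" "snd z", unfolded prod.collapse] by simp
  finally show ?thesis .
qed

lemma C1_bal: "rot \<theta> z \<in> CH P \<delta> Mp R1 \<Longrightarrow> bal Mp R1 z"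
  using rotbal[of "rot \<theta> z" "-\<theta>"] rot_inv by simp
lemma C3_bal: "rot \<theta> z \<in> CHi P \<delta> Mp R1 \<Longrightarrow> bal Mp R1 z"
  using rotbal[of "rot \<theta> z" "-\<theta>"] rot_inv by simp

lemma sum4: "(\<Sum>k<(4::nat). f k) = f 0 + f 1 + f 2 + (f 3 :: real)"
  by (simp add: eval_nat_numeral)
lemma sum4m: "j < (4::nat) \<Longrightarrow> (\<Sum>k\<in>{..<4}-{j}. f k) = (\<Sum>k<4. f k) - (f j :: real)"
  by (subst sum_diff1) auto

lemma tree_applied:
  fixes a1 a2 a3 a4 :: real
  assumes pos: "a1 > 0" "a2 > 0" "a3 > 0" "a4 > 0" and sum1: "a1 + a2 + a3 + a4 = 1"
  shows "\<exists>h. h \<in> borel_measurable borel \<and> (\<forall>z. 0 \<le> h z \<and> h z \<le> 1)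
    \<and> (\<forall>z. a1 * h (henon P \<delta> z) + a2 * h ((rot (-\<theta>) \<circ> henon P \<delta> \<circ> rot \<theta>) z)
          + a3 * h (h1i P \<delta> z) + a4 * h ((rot (-\<theta>) \<circ> h1i P \<delta> \<circ> rot \<theta>) z) \<le> h z)
    \<and> (\<forall>z. z \<notin> cball 0 (2*R1) \<longrightarrow> a1 * h (henon P \<delta> z) + a2 * h ((rot (-\<theta>) \<circ> henon P \<delta> \<circ> rot \<theta>) z)
          + a3 * h (h1i P \<delta> z) + a4 * h ((rot (-\<theta>) \<circ> h1i P \<delta> \<circ> rot \<theta>) z) < h z)"
proof -
  obtain r s where rs: "0 < r" "r < 1" "0 < s" "s < 1"
    "a1 * r + a2 * s + a4 * s + a3 / r < 1" "a3 * r + a2 * s + a4 * s + a1 / r < 1"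
    "a1 * r + a3 * r + a2 * s + a4 / s < 1" "a1 * r + a3 * r + a4 * s + a2 / s < 1"
    using rho_exists[OF pos sum1[unfolded add.assoc, folded add.assoc]] by (auto simp: algebra_simps)
  let ?G1 = "rot (-\<theta>) \<circ> henon P \<delta> \<circ> rot \<theta>" and ?G3 = "rot (-\<theta>) \<circ> h1i P \<delta> \<circ> rot \<theta>"
  let ?CH = "CH P \<delta> Mp R1" and ?CHi = "CHi P \<delta> Mp R1"
  define g where "g j = (if j = 0 then henon P \<delta> else if j = 1 then ?G1 else if j = 2 then h1i P \<delta> else ?G3)" for j :: nat
  define C where "C j = (if j = 0 then ?CH else if j = 1 then rot \<theta> -` ?CH else if j = 2 then ?CHi else rot \<theta> -` ?CHi)" for j :: nat
  define a where "a j = (if j = 0 then a1 else if j = 1 then a2 else if j = 2 then a3 else a4)" for j :: nat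
  define \<rho> where "\<rho> j = (if j = 0 \<or> j = 2 then r else s)" for j :: nat
  have bar: "bar 0 = 2" "bar 1 = 3" "bar 2 = 0" "bar 3 = 1" "bar (Suc 0) = 3" by (simp_all add: bar_def)
  have "\<exists>h. h \<in> borel_measurable borel \<and> (\<forall>z. 0 \<le> h z \<and> h z \<le> 1)
     \<and> (\<forall>z. (\<Sum>k<4. a k * h (g k z)) \<le> h z) \<and> (\<forall>z. z \<notin> cball 0 (2*R1) \<longrightarrow> (\<Sum>k<4. a k * h (g k z)) < h z)"
  proof (rule tree_h[where C=C and E=norm])
    fix j :: nat assume j: "j < 4"
    have m1: "?G1 \<in> borel_measurable borel" "?G3 \<in> borel_measurable borel"
      using meas_rot meas_henon meas_h1i by (auto intro!: measurable_comp)
    show "g j \<in> borel_measurable borel" unfolding g_def using m1 meas_henon meas_h1i by auto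
  next
    fix j :: nat assume j: "j < 4"
    have c: "?CH \<in> sets borel" "?CHi \<in> sets borel" using closed_CH closed_CHi by auto
    have "rot \<theta> -` ?CH \<in> sets borel" "rot \<theta> -` ?CHi \<in> sets borel"
      using measurable_sets[OF meas_rot c(1)] measurable_sets[OF meas_rot c(2)] by auto
    then show "C j \<in> sets borel" unfolding C_def using c by auto
  next
    fix j k :: nat assume jk: "j < 4" "k < 4" "j \<noteq> k"
    have d: "?CH \<inter> rot \<theta> -` ?CH = {}" "?CH \<inter> rot \<theta> -` ?CHi = {}" "?CHi \<inter> rot \<theta> -` ?CH = {}"
      "?CHi \<inter> rot \<theta> -` ?CHi = {}" "?CH \<inter> ?CHi = {}" "rot \<theta> -` ?CH \<inter> rot \<theta> -` ?CHi = {}"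
      using C1_bal C3_bal notbal_CH notbal_CHi CH_CHi by blast+
    show "C j \<inter> C k = {}"
      using lt4[OF jk(1)] lt4[OF jk(2)] jk(3) unfolding C_def
      by (elim disjE) (simp_all add: d Int_commute)
  next
    fix j :: nat and z assume j: "j < 4"
    show "g (bar j) (g j z) = z"
      using lt4[OF j] unfolding g_def
      by (elim disjE) (simp_all add: bar henon_h1i[OF \<delta>] h1i_henon[OF \<delta>] rot_inv rot_inv')
  next
    fix j :: nat and z assume j: "j < 4" and z: "z \<in> C j"
    show "norm (g (bar j) z) \<le> norm z - 1"
      using lt4[OF j] z unfolding g_def C_def
      by (elim disjE) (simp_all add: bar decA decB rot_norm decA[of "rot \<theta> z", unfolded rot_norm] decB[of "rot \<theta> z", unfolded rot_norm])
  next
    fix j k :: nat and z assume j: "j < 4" and k: "k < 4" and kj: "k \<noteq> bar j" and z: "z \<in> C j"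
    have b1: "bal Mp R1 (rot \<theta> z)" if "z \<in> ?CH \<or> z \<in> ?CHi" using rotbal[OF that, of \<theta>] by simp
    have bf1: "henon P \<delta> w \<in> ?CH" and bf2: "h1i P \<delta> w \<in> ?CHi" if "bal Mp R1 w" for w
      using bal_fwd[OF that] by auto
    have rb1: "bal Mp R1 (rot \<theta> w)" if "w \<in> ?CH" for w using rotbal[of w \<theta>] that by simp
    have rb2: "bal Mp R1 (rot \<theta> w)" if "w \<in> ?CHi" for w using rotbal[of w \<theta>] that by simp
    show "g k z \<in> C k"
      using lt4[OF j] lt4[OF k] kj z unfolding g_def C_def
      by (elim disjE) (simp_all add: bar rot_inv' bf1 bf2 rb1 rb2 C1_bal C3_bal CH_self CHi_self)
  next
    fix z :: C2 assume nD: "z \<notin> cball 0 (2*R1)"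
    have "norm z > 2 * R1" using nD by simp
    then have "norm (fst z) + norm (snd z) > 2 * R1" using norm_Pair_le[of "fst z" "snd z"] by simp
    then have "(norm (fst z) \<le> Mp * norm (snd z) \<and> R1 \<le> norm (snd z)) \<or> (norm (snd z) \<le> Mp * norm (fst z) \<and> R1 \<le> norm (fst z))"
    proof (cases "norm (fst z) \<le> norm (snd z)")
      case True
      have "norm (snd z) \<le> Mp * norm (snd z)" using Mp4 by (simp add: mult_le_cancel_right1)
      then show ?thesis using True \<open>norm (fst z) + norm (snd z) > 2 * R1\<close> by auto
    next
      case False
      have "norm (fst z) \<le> Mp * norm (fst z)" using Mp4 by (simp add: mult_le_cancel_right1)
      then show ?thesis using False \<open>norm (fst z) + norm (snd z) > 2 * R1\<close> by auto
    qed
    then have "henon P \<delta> z \<in> ?CH \<or> h1i P \<delta> z \<in> ?CHi" using L1 L1' by blast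
    then show "\<exists>k<4. g k z \<in> C k"
    proof
      assume "henon P \<delta> z \<in> ?CH" then show ?thesis by (intro exI[of _ 0]) (simp add: g_def C_def)
    next
      assume "h1i P \<delta> z \<in> ?CHi" then show ?thesis by (intro exI[of _ 2]) (simp add: g_def C_def)
    qed
  next
    fix k :: nat assume "k < 4" then show "a k > 0" unfolding a_def using pos by auto
  next
    show "(\<Sum>k<4. a k) = 1" unfolding sum4 a_def using sum1 by simp
  next
    fix k :: nat assume "k < 4" then show "0 < \<rho> k \<and> \<rho> k < 1" unfolding \<rho>_def using rs by auto
  next
    fix j :: nat assume j: "j < 4"
    show "(\<Sum>k\<in>{..<4}-{bar j}. a k * \<rho> k) + a (bar j) / \<rho> j < 1"
      unfolding sum4m[OF bar_lt[OF j]] sum4 using lt4[OF j] rs(5-8) unfolding a_def \<rho>_def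
      by (elim disjE) (simp_all add: bar algebra_simps)
  qed simp
  then obtain h where h: "h \<in> borel_measurable borel" "\<forall>z. 0 \<le> h z \<and> h z \<le> 1"
     "\<forall>z. (\<Sum>k<4. a k * h (g k z)) \<le> h z" "\<forall>z. z \<notin> cball 0 (2*R1) \<longrightarrow> (\<Sum>k<4. a k * h (g k z)) < h z"
    by blast
  have e: "(\<Sum>k<4. a k * h (g k z)) = a1 * h (henon P \<delta> z) + a2 * h (?G1 z) + a3 * h (h1i P \<delta> z) + a4 * h (?G3 z)" for z
    unfolding sum4 a_def g_def by simp
  show ?thesis using h unfolding e by blast
qed

end



lemma sin_cos_nz:
  assumes "\<theta> \<in> {0<..<2*pi} - {pi/2, pi, 3*pi/2}"
  shows "sin \<theta> \<noteq> 0" "cos \<theta> \<noteq> 0"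
proof -
  have t: "0 < \<theta>" "\<theta> < 2*pi" "\<theta> \<noteq> pi/2" "\<theta> \<noteq> pi" "\<theta> \<noteq> 3*pi/2" using assms by auto
  show "sin \<theta> \<noteq> 0"
  proof
    assume "sin \<theta> = 0"
    then obtain i :: int where i: "\<theta> = of_int i * pi" using sin_zero_iff_int2 by blast
    have "0 < of_int i * pi" "of_int i * pi < 2 * pi" using t i by auto
    then have "0 < (of_int i :: real)" "(of_int i :: real) < 2" using pi_gt_zero
      by (simp_all add: zero_less_mult_iff mult_less_cancel_right)
    then have "i = 1" by linarith
    then show False using t i by simp
  qed
  show "cos \<theta> \<noteq> 0"
  proof
    assume "cos \<theta> = 0"
    then obtain n :: int where n: "\<theta> = of_int n * pi + pi/2" using cos_zero_iff_int2 by blast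
    have "0 < (of_int n + 1/2) * pi" "(of_int n + 1/2) * pi < 2 * pi" using t n by (auto simp: algebra_simps)
    then have "0 < of_int n + (1/2::real)" "of_int n + 1/2 < (2::real)" using pi_gt_zero
      by (simp_all add: zero_less_mult_iff mult_less_cancel_right)
    then have "n = 0 \<or> n = 1" by linarith
    then show False using t n by (auto simp: algebra_simps)
  qed
qed

lemma null_pre:
  fixes g1 g2 g3 g4 :: "C2 \<Rightarrow> C2" and \<mu> :: "C2 measure"
  assumes sets: "sets \<mu> = sets borel"
    and eq: "\<forall>A \<in> sets borel. emeasure \<mu> A =
          ennreal a1 * emeasure (distr \<mu> borel g1) A
        + ennreal a2 * emeasure (distr \<mu> borel g2) A
        + ennreal a3 * emeasure (distr \<mu> borel g3) A
        + ennreal a4 * emeasure (distr \<mu> borel g4) A"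
    and m1: "g1 \<in> borel_measurable borel" and m2: "g2 \<in> borel_measurable borel"
    and m3: "g3 \<in> borel_measurable borel" and m4: "g4 \<in> borel_measurable borel"
    and a: "a1 > 0" "a2 > 0" "a3 > 0" "a4 > 0"
    and A: "A \<in> sets borel" "emeasure \<mu> A = 0"
  shows "emeasure \<mu> (g1 -` A) = 0 \<and> emeasure \<mu> (g2 -` A) = 0 \<and> emeasure \<mu> (g3 -` A) = 0 \<and> emeasure \<mu> (g4 -` A) = 0"
proof -
  have mc: "\<And>N. measurable \<mu> N = measurable borel N" by (rule measurable_cong_sets[OF sets refl])
  have sp: "space \<mu> = UNIV" using sets_eq_imp_space_eq[OF sets] by simp
  have d: "emeasure (distr \<mu> borel g) A = emeasure \<mu> (g -` A)" if "g \<in> borel_measurable borel" for g :: "C2 \<Rightarrow> C2"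
  proof -
    have "g \<in> \<mu> \<rightarrow>\<^sub>M borel" by (subst mc) (rule that)
    then show ?thesis using emeasure_distr[of g \<mu> borel A] A(1) sp by simp
  qed
  have "0 = ennreal a1 * emeasure \<mu> (g1 -` A) + ennreal a2 * emeasure \<mu> (g2 -` A)
        + ennreal a3 * emeasure \<mu> (g3 -` A) + ennreal a4 * emeasure \<mu> (g4 -` A)"
  proof -
    have "emeasure \<mu> A = ennreal a1 * emeasure (distr \<mu> borel g1) A
        + ennreal a2 * emeasure (distr \<mu> borel g2) A
        + ennreal a3 * emeasure (distr \<mu> borel g3) A
        + ennreal a4 * emeasure (distr \<mu> borel g4) A" using eq A(1) by blast
    then show ?thesis unfolding d[OF m1] d[OF m2] d[OF m3] d[OF m4] A(2) by simp
  qed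
  then show ?thesis using a by (simp add: add_eq_0_iff_both_eq_0)
qed

lemma iter_null:
  fixes g :: "C2 \<Rightarrow> C2" and \<mu> :: "C2 measure"
  assumes gm: "g \<in> borel_measurable borel"
    and pre: "\<And>A. A \<in> sets borel \<Longrightarrow> emeasure \<mu> A = 0 \<Longrightarrow> emeasure \<mu> (g -` A) = 0"
    and A: "A \<in> sets borel" "emeasure \<mu> A = 0"
  shows "(g ^^ n) -` A \<in> sets borel \<and> emeasure \<mu> ((g ^^ n) -` A) = 0"
proof (induction n)
  case 0 then show ?case using A by simp
next
  case (Suc n)
  have e: "(g ^^ Suc n) -` A = g -` ((g ^^ n) -` A)" by (rule set_eqI) (simp add: funpow_swap1)
  have "g -` ((g ^^ n) -` A) \<in> sets borel"
    using measurable_sets[OF gm, of "(g ^^ n) -` A"] Suc by simp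
  then show ?case unfolding e using pre Suc by simp
qed
theorem theoremC:
  fixes P :: "complex poly" and \<delta> :: complex and \<theta> :: real
    and a1 a2 a3 a4 :: real
    and h1 h2 :: "complex \<times> complex \<Rightarrow> complex \<times> complex"
  assumes "degree P \<ge> 2"
    and "\<delta> \<noteq> 0"
    and "h1 = henon P \<delta>"
    and "\<theta> \<in> {0<..<2*pi} - {pi/2, pi, 3*pi/2}"
    and "h2 = inv (rot \<theta>) \<circ> h1 \<circ> rot \<theta>"
    and "a1 > 0" "a2 > 0" "a3 > 0" "a4 > 0"
    and "a1 + a2 + a3 + a4 = 1"
    and "filled_julia h1 \<inter> filled_julia h2 = {}"
  shows "\<not> (\<exists>\<mu>. stationary a1 a2 a3 a4 h1 h2 \<mu>)"
proof
  assume "\<exists>\<mu>. stationary a1 a2 a3 a4 h1 h2 \<mu>"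
  then obtain \<mu> where st: "stationary a1 a2 a3 a4 h1 h2 \<mu>" by blast
  have dlt: "\<delta> \<noteq> 0" by (rule assms(2))
  have sc: "sin \<theta> \<noteq> 0" "cos \<theta> \<noteq> 0" using sin_cos_nz[OF assms(4)] by auto
  define m where "m = min \<bar>sin \<theta>\<bar> \<bar>cos \<theta>\<bar>"
  have m: "m > 0" "\<bar>sin \<theta>\<bar> \<ge> m" "\<bar>cos \<theta>\<bar> \<ge> m" using sc unfolding m_def by auto
  define Mp where "Mp = 4/m"
  define B where "B = Mp + 2/m + 3"
  have Mp0: "Mp \<ge> 0" and B0: "B \<ge> 0" using m unfolding Mp_def B_def by auto
  obtain Ra where Ra: "Ra \<ge> 1" "\<forall>x y. Ra \<le> norm x \<and> norm (y - poly P x) \<le> (Mp * norm \<delta>) * norm x \<longrightarrow> B * norm x \<le> norm y"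
    using poly_grow[OF assms(1), of "Mp * norm \<delta>" B] Mp0 B0 by auto
  have degQ: "degree (smult (1/\<delta>) P) \<ge> 2" using assms(1) dlt by simp
  obtain Rb where Rb: "Rb \<ge> 1" "\<forall>x y. Rb \<le> norm x \<and> norm (y - poly (smult (1/\<delta>) P) x) \<le> (Mp / norm \<delta>) * norm x \<longrightarrow> B * norm x \<le> norm y"
    using poly_grow[OF degQ, of "Mp / norm \<delta>" B] Mp0 B0 by auto
  define R1 where "R1 = max Ra Rb"
  have R1: "R1 \<ge> 1" using Ra unfolding R1_def by simp
  have growA: "B * norm x \<le> norm y" if "R1 \<le> norm x" "norm (y - poly P x) \<le> (Mp * norm \<delta>) * norm x" for x y
    using Ra(2) that unfolding R1_def by auto
  have growB: "B * norm y \<le> norm x" if "R1 \<le> norm y" "norm (\<delta> * x - poly P y) \<le> Mp * norm y" for x y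
  proof -
    have "x - poly (smult (1/\<delta>) P) y = (\<delta> * x - poly P y) / \<delta>" using dlt by (simp add: field_simps)
    then have "norm (x - poly (smult (1/\<delta>) P) y) = norm (\<delta> * x - poly P y) / norm \<delta>" by (simp add: norm_divide)
    also have "\<dots> \<le> Mp * norm y / norm \<delta>" using that(2) by (intro divide_right_mono) auto
    finally have "norm (x - poly (smult (1/\<delta>) P) y) \<le> (Mp / norm \<delta>) * norm y" by simp
    then show ?thesis using Rb(2) that(1) unfolding R1_def by auto
  qed
  let ?G1 = "rot (-\<theta>) \<circ> henon P \<delta> \<circ> rot \<theta>" and ?G3 = "rot (-\<theta>) \<circ> h1i P \<delta> \<circ> rot \<theta>"
  let ?D = "cball (0::C2) (2*R1)"
  obtain h where h: "h \<in> borel_measurable borel" "\<forall>z. 0 \<le> h z \<and> h z \<le> 1"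
    "\<forall>z. a1 * h (henon P \<delta> z) + a2 * h (?G1 z) + a3 * h (h1i P \<delta> z) + a4 * h (?G3 z) \<le> h z"
    "\<forall>z. z \<notin> ?D \<longrightarrow> a1 * h (henon P \<delta> z) + a2 * h (?G1 z) + a3 * h (h1i P \<delta> z) + a4 * h (?G3 z) < h z"
    using tree_applied[OF dlt m Mp_def B_def R1 growA growB assms(6-10)] by blast
  have h1e: "h1 = henon P \<delta>" by (rule assms(3))
  have h2e: "h2 = ?G1" using assms(5) h1e inv_rot by simp
  have ih1: "inv h1 = h1i P \<delta>" using h1e inv_henon[OF dlt] by simp
  have ih2: "inv h2 = ?G3" using h2e inv_h2[OF dlt] by simp
  have sets: "sets \<mu> = sets borel" and ps: "prob_space \<mu>"
    and eq: "\<forall>A \<in> sets borel. emeasure \<mu> A =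
          ennreal a1 * emeasure (distr \<mu> borel (henon P \<delta>)) A
        + ennreal a2 * emeasure (distr \<mu> borel ?G1) A
        + ennreal a3 * emeasure (distr \<mu> borel (h1i P \<delta>)) A
        + ennreal a4 * emeasure (distr \<mu> borel ?G3) A"
    using st unfolding stationary_def ih1 ih2 by (auto simp: h1e h2e)
  have sp: "space \<mu> = UNIV" using sets_eq_imp_space_eq[OF sets] by simp
  have one: "emeasure \<mu> UNIV = 1" using prob_space.emeasure_space_1[OF ps] sp by simp
  have m1: "henon P \<delta> \<in> borel_measurable borel" by (rule meas_henon)
  have m3: "h1i P \<delta> \<in> borel_measurable borel" by (rule meas_h1i)
  have m2: "?G1 \<in> borel_measurable borel" using meas_rot meas_henon by (auto intro!: measurable_comp)
  have m4: "?G3 \<in> borel_measurable borel" using meas_rot meas_h1i by (auto intro!: measurable_comp)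
  have Dm: "?D \<in> sets borel" by simp
  have nullD: "emeasure \<mu> (- ?D) = 0"
    by (rule stat_null[OF sets _ eq m1 m2 m3 m4 _ _ _ _ h(1), where D="?D"])
       (use one h assms(6-9) in auto)
  have cD: "- ?D \<in> sets borel" by simp
  note pre = null_pre[OF sets eq m1 m2 m3 m4 assms(6-9)]
  have it1: "\<And>n. (henon P \<delta> ^^ n) -` (- ?D) \<in> null_sets \<mu>"
    using iter_null[OF m1 _ cD nullD] pre sets by (auto simp: null_sets_def)
  have it2: "\<And>n. (?G1 ^^ n) -` (- ?D) \<in> null_sets \<mu>"
    using iter_null[OF m2 _ cD nullD] pre sets by (auto simp: null_sets_def)
  have it3: "\<And>n. (h1i P \<delta> ^^ n) -` (- ?D) \<in> null_sets \<mu>"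
    using iter_null[OF m3 _ cD nullD] pre sets by (auto simp: null_sets_def)
  have it4: "\<And>n. (?G3 ^^ n) -` (- ?D) \<in> null_sets \<mu>"
    using iter_null[OF m4 _ cD nullD] pre sets by (auto simp: null_sets_def)
  have cover: "UNIV \<subseteq> (\<Union>n. (henon P \<delta> ^^ n) -` (- ?D)) \<union> (\<Union>n. (h1i P \<delta> ^^ n) -` (- ?D))
      \<union> ((\<Union>n. (?G1 ^^ n) -` (- ?D)) \<union> (\<Union>n. (?G3 ^^ n) -` (- ?D)))"
  proof
    fix z :: C2
    show "z \<in> (\<Union>n. (henon P \<delta> ^^ n) -` (- ?D)) \<union> (\<Union>n. (h1i P \<delta> ^^ n) -` (- ?D))
      \<union> ((\<Union>n. (?G1 ^^ n) -` (- ?D)) \<union> (\<Union>n. (?G3 ^^ n) -` (- ?D)))"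
    proof (rule ccontr)
      assume "\<not> ?thesis"
      then have a: "\<And>n. (henon P \<delta> ^^ n) z \<in> ?D" "\<And>n. (h1i P \<delta> ^^ n) z \<in> ?D"
        "\<And>n. (?G1 ^^ n) z \<in> ?D" "\<And>n. (?G3 ^^ n) z \<in> ?D" by auto
      have "range (\<lambda>n::int. int_iter h1 n z) \<subseteq> ?D"
        unfolding int_iter_def ih1 using a(1,2) by (auto simp: h1e)
      then have k1: "z \<in> filled_julia h1" unfolding filled_julia_def by (auto intro: bounded_subset)
      have "range (\<lambda>n::int. int_iter h2 n z) \<subseteq> ?D"
        unfolding int_iter_def ih2 using a(3,4) by (auto simp: h2e)
      then have k2: "z \<in> filled_julia h2" unfolding filled_julia_def by (auto intro: bounded_subset)
      show False using k1 k2 assms(11) by blast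
    qed
  qed
  have "(\<Union>n. (henon P \<delta> ^^ n) -` (- ?D)) \<union> (\<Union>n. (h1i P \<delta> ^^ n) -` (- ?D))
      \<union> ((\<Union>n. (?G1 ^^ n) -` (- ?D)) \<union> (\<Union>n. (?G3 ^^ n) -` (- ?D))) \<in> null_sets \<mu>"
    using it1 it2 it3 it4 by (intro null_sets.Un null_sets_UN) auto
  then have "UNIV \<in> null_sets \<mu>" using cover by (metis top.extremum_uniqueI)
  then show False using one by (simp add: null_sets_def)
qed

end
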